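(* The map $(m,n)\mapsto d_{m,n}$ is a metric on $\overline{\mathbb{N}}=\mathbb{N}\cup\{-1\}$.
   Context: Let $\mathbb{N}=\{0,1,2,\dots\}$. Fix a sequence $(\pi^n)_{n\in\mathbb{N}}$ where each $\pi^n=(\pi^n_i)_{i\in\mathbb{N}}$ is a probability distribution on $\mathbb{N}$ with support contained in $\{0,\dots,n\}$, and $\pi^n\ne\pi^m$ for $m\ne n$. Define reals $d_{m,n}$ for $m,n\in\mathbb{N}\cup\{-1\}$ recursively as follows: $d_{-1,-1}=0$, $d_{-1,j}=d_{j,-1}=1$ for $j\in\mathbb{N}$, and for $m,n\in\mathbb{N}$, $$d_{m,n}=\min_{z\in\mathcal{F}_{m,n}}\sum_{i=0}^m\sum_{j=0}^n z_{i,j}\,d_{i-1,j-1},$$ where $\mathcal{F}_{m,n}$ is the set of transport plans from $\pi^m$ to $\pi^n$, i.e. arrays $z=(z_{i,j})_{0\le i\le m,\,0\le j\le n}$ with $z_{i,j}\ge0$, $\sum_{j=0}^n z_{i,j}=\pi^m_i$ for all $i\le m$, and $\sum_{i=0}^m z_{i,j}=\pi^n_j$ for all $j\le n$. *)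

theory Defs
  imports "HOL-Analysis.Analysis"
begin

text \<open>Distributions p n (= pi^n) are functions nat => real, p n i being the mass of i.
  Transport plans from p m to p n: arrays z indexed by 0..m x 0..n (zero outside).\<close>

definition transport_plans :: "(nat \<Rightarrow> nat \<Rightarrow> real) \<Rightarrow> nat \<Rightarrow> nat \<Rightarrow> (nat \<Rightarrow> nat \<Rightarrow> real) set" where
  "transport_plans p m n =
     {z. (\<forall>i j. z i j \<ge> 0) \<and> (\<forall>i j. (i > m \<or> j > n) \<longrightarrow> z i j = 0)
         \<and> (\<forall>i\<le>m. (\<Sum>j\<le>n. z i j) = p m i) \<and> (\<forall>j\<le>n. (\<Sum>i\<le>m. z i j) = p n j)}"

text \<open>Shifted version: dd p a b = d_{a-1,b-1}. The minimum is rendered as Inf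
  (the set of costs is the image of a nonempty compact polytope, so the minimum exists).\<close>

function dd :: "(nat \<Rightarrow> nat \<Rightarrow> real) \<Rightarrow> nat \<Rightarrow> nat \<Rightarrow> real" where
  "dd p 0 0 = 0"
| "dd p 0 (Suc j) = 1"
| "dd p (Suc i) 0 = 1"
| "dd p (Suc m) (Suc n) =
     Inf ((\<lambda>z. \<Sum>i\<le>m. \<Sum>j\<le>n. z i j * dd p i j) ` transport_plans p m n)"
  by pat_completeness auto
termination
  by (relation "Wellfounded.measure (\<lambda>(p, a, b). a)") auto

text \<open>d on N-bar = {-1,0,1,...}, represented as integers >= -1.\<close>

definition dmet :: "(nat \<Rightarrow> nat \<Rightarrow> real) \<Rightarrow> int \<Rightarrow> int \<Rightarrow> real" where
  "dmet p m n = dd p (nat (m + 1)) (nat (n + 1))"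

end

theory Submission
  imports Defs
begin

definition W :: "(nat\<Rightarrow>nat\<Rightarrow>real) \<Rightarrow> (nat\<Rightarrow>nat\<Rightarrow>real) \<Rightarrow> nat \<Rightarrow> nat \<Rightarrow> real" where
  "W p D m n = Inf ((\<lambda>z. \<Sum>i\<le>m. \<Sum>j\<le>n. z i j * D i j) ` transport_plans p m n)"

lemma dd_W: "dd p (Suc m) (Suc n) = W p (dd p) m n" by (simp add: W_def)

definition good :: "nat \<Rightarrow> (nat\<Rightarrow>nat\<Rightarrow>real) \<Rightarrow> bool" where
  "good N D = (\<forall>i j k. i\<le>N \<longrightarrow> j\<le>N \<longrightarrow> k\<le>N \<longrightarrow> 0 \<le> D i j \<and> D i j \<le> 1 \<and> D i j = D j i
      \<and> (D i j = 0 \<longleftrightarrow> i = j) \<and> D i k \<le> D i j + D j k)"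

context
  fixes p :: "nat \<Rightarrow> nat \<Rightarrow> real"
  assumes nonneg: "\<And>n i. p n i \<ge> 0"
    and supp: "\<And>n i. i > n \<Longrightarrow> p n i = 0"
    and total: "\<And>n. (\<Sum>i\<le>n. p n i) = 1"
begin

lemma TP_nonneg: "z \<in> transport_plans p m n \<Longrightarrow> 0 \<le> z i j"
  by (simp add: transport_plans_def)

lemma TP_zero: "z \<in> transport_plans p m n \<Longrightarrow> i > m \<or> j > n \<Longrightarrow> z i j = 0"
  by (auto simp add: transport_plans_def)

lemma TP_row: assumes z: "z \<in> transport_plans p m n" shows "(\<Sum>j\<le>n. z i j) = p m i"
proof (cases "i \<le> m")
  case True then show ?thesis
    using z by (simp add: transport_plans_def)
next
  case False
  then have "(\<Sum>j\<le>n. z i j) = 0" using False TP_zero[OF z] by simp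
  then show ?thesis using False supp by simp
qed

lemma TP_col: assumes z: "z \<in> transport_plans p m n" shows "(\<Sum>i\<le>m. z i j) = p n j"
proof (cases "j \<le> n")
  case True then show ?thesis
    using z by (simp add: transport_plans_def)
next
  case False
  then have "(\<Sum>i\<le>m. z i j) = 0" using False TP_zero[OF z] by simp
  then show ?thesis using False supp by simp
qed

lemma TP_colzero: assumes z: "z \<in> transport_plans p m n" and "p n j = 0" shows "z i j = 0"
proof (cases "i \<le> m")
  case True
  have "(\<Sum>i\<le>m. z i j) = 0" using TP_col[OF z] assms(2) by simp
  then have "\<forall>i\<in>{..m}. z i j = 0" using TP_nonneg[OF z]
    by (subst sum_nonneg_eq_0_iff[symmetric]) auto
  then show ?thesis using True by auto
next
  case False then show ?thesis using TP_zero[OF z] by simp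
qed

lemma TP_rowzero: assumes z: "z \<in> transport_plans p m n" and "p m i = 0" shows "z i j = 0"
proof (cases "j \<le> n")
  case True
  have "(\<Sum>j\<le>n. z i j) = 0" using TP_row[OF z] assms(2) by simp
  then have "\<forall>j\<in>{..n}. z i j = 0" using TP_nonneg[OF z]
    by (subst sum_nonneg_eq_0_iff[symmetric]) auto
  then show ?thesis using True by auto
next
  case False then show ?thesis using TP_zero[OF z] by simp
qed

lemma prod_plan: "(\<lambda>i j. p m i * p n j) \<in> transport_plans p m n"
  unfolding transport_plans_def
  using nonneg supp total by (auto simp: sum_distrib_left[symmetric] sum_distrib_right[symmetric])

lemma TP_ne: "transport_plans p m n \<noteq> {}"
  using prod_plan by blast

lemma cost_nonneg: assumes "z \<in> transport_plans p m n" "good N D" "m \<le> N" "n \<le> N"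
  shows "0 \<le> (\<Sum>i\<le>m. \<Sum>j\<le>n. z i j * D i j)"
  using assms TP_nonneg[OF assms(1)] unfolding good_def
  by (intro sum_nonneg) auto

lemma W_lower: assumes "z \<in> transport_plans p m n" "good N D" "m \<le> N" "n \<le> N"
  shows "W p D m n \<le> (\<Sum>i\<le>m. \<Sum>j\<le>n. z i j * D i j)"
  unfolding W_def
proof (rule cInf_lower)
  show "bdd_below ((\<lambda>z. \<Sum>i\<le>m. \<Sum>j\<le>n. z i j * D i j) ` transport_plans p m n)"
    using cost_nonneg[OF _ assms(2-4)] by (intro bdd_belowI[where m=0]) auto
qed (use assms in auto)

lemma W_greatest: assumes "\<And>z. z \<in> transport_plans p m n \<Longrightarrow> c \<le> (\<Sum>i\<le>m. \<Sum>j\<le>n. z i j * D i j)"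
  shows "c \<le> W p D m n"
  unfolding W_def using assms TP_ne by (intro cInf_greatest) auto

lemma W_nonneg: assumes "good N D" "m \<le> N" "n \<le> N" shows "0 \<le> W p D m n"
  using cost_nonneg[OF _ assms] by (intro W_greatest) auto

lemma W_le1: assumes "good N D" "m \<le> N" "n \<le> N" shows "W p D m n \<le> 1"
proof -
  let ?z = "\<lambda>i j. p m i * p n j"
  have "W p D m n \<le> (\<Sum>i\<le>m. \<Sum>j\<le>n. ?z i j * D i j)"
    by (rule W_lower[OF prod_plan assms])
  also have "\<dots> \<le> (\<Sum>i\<le>m. \<Sum>j\<le>n. ?z i j)"
    using assms nonneg unfolding good_def
    by (intro sum_mono mult_left_le) auto
  also have "\<dots> = 1"
    using total by (simp add: sum_distrib_left[symmetric] sum_distrib_right[symmetric])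
  finally show ?thesis .
qed

lemma W_sym_le: assumes "good N D" "m \<le> N" "n \<le> N" shows "W p D n m \<le> W p D m n"
proof (rule W_greatest)
  fix z assume z: "z \<in> transport_plans p m n"
  have zt: "(\<lambda>i j. z j i) \<in> transport_plans p n m"
    using z unfolding transport_plans_def by auto
  have "W p D n m \<le> (\<Sum>i\<le>n. \<Sum>j\<le>m. z j i * D i j)"
    by (rule W_lower[OF zt assms(1,3,2)])
  also have "\<dots> = (\<Sum>j\<le>m. \<Sum>i\<le>n. z j i * D j i)"
    using assms unfolding good_def
    by (subst sum.swap) (intro sum.cong refl, auto)
  finally show "W p D n m \<le> (\<Sum>i\<le>m. \<Sum>j\<le>n. z i j * D i j)" .
qed

lemma W_sym: assumes "good N D" "m \<le> N" "n \<le> N" shows "W p D n m = W p D m n"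
  using W_sym_le[OF assms] W_sym_le[OF assms(1,3,2)] by linarith

lemma W_refl: assumes "good N D" "m \<le> N" shows "W p D m m = 0"
proof -
  let ?e = "\<lambda>i j. if i = j then p m i else 0"
  have e: "?e \<in> transport_plans p m m"
    unfolding transport_plans_def using nonneg supp by (auto simp: if_distrib)
  have "W p D m m \<le> (\<Sum>i\<le>m. \<Sum>j\<le>m. ?e i j * D i j)"
    by (rule W_lower[OF e assms assms(2)])
  also have "\<dots> = 0"
    using assms unfolding good_def by (auto intro!: sum.neutral)
  finally show ?thesis using W_nonneg[OF assms assms(2)] by linarith
qed

lemma W_pos: assumes "good N D" "m \<le> N" "n \<le> N" "m \<noteq> n" "W p D m n = 0"
  shows "p m = p n"
proof
  fix k
  define S where "S = {(i,j). i \<le> m \<and> j \<le> n \<and> i \<noteq> j}"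
  have finS: "finite S" unfolding S_def
    by (rule finite_subset[of _ "{..m} \<times> {..n}"]) auto
  have neS: "(m,n) \<in> S" using assms(4) by (simp add: S_def)
  define \<delta> where "\<delta> = Min ((\<lambda>(i,j). D i j) ` S)"
  have Dpos: "(i,j) \<in> S \<Longrightarrow> 0 < D i j" for i j
    using assms(1-3) unfolding good_def S_def
    by (metis (mono_tags, lifting) case_prodD less_eq_real_def mem_Collect_eq order_trans)
  have dpos: "0 < \<delta>"
    unfolding \<delta>_def using finS neS Dpos by (subst Min_gr_iff) auto
  have dle: "(i,j) \<in> S \<Longrightarrow> \<delta> \<le> D i j" for i j
    unfolding \<delta>_def using finS by (metis (mono_tags, lifting) Min_le case_prod_conv finite_imageI image_eqI)
  have "\<bar>p m k - p n k\<bar> * \<delta> / 2 \<le> W p D m n"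
  proof (rule W_greatest)
    fix z assume z: "z \<in> transport_plans p m n"
    note zn = TP_nonneg[OF z]
    define off where "off = (\<Sum>i\<le>m. \<Sum>j\<le>n. if i = j then 0 else z i j)"
    have "\<delta> * off = (\<Sum>i\<le>m. \<Sum>j\<le>n. \<delta> * (if i = j then 0 else z i j))"
      unfolding off_def by (simp add: sum_distrib_left)
    also have "\<dots> \<le> (\<Sum>i\<le>m. \<Sum>j\<le>n. z i j * D i j)"
    proof (intro sum_mono)
      fix i j assume ij: "i \<in> {..m}" "j \<in> {..n}"
      show "\<delta> * (if i = j then 0 else z i j) \<le> z i j * D i j"
      proof (cases "i = j")
        case True then show ?thesis using zn[of i j] Dpos assms(1-3) ij unfolding good_def
          by (simp add: mult_nonneg_nonneg)
      next
        case False
        then have "(i,j) \<in> S" using ij by (simp add: S_def)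
        then show ?thesis using False dle[of i j] zn[of i j]
          by (simp add: mult.commute mult_right_mono)
      qed
    qed
    finally have c1: "\<delta> * off \<le> (\<Sum>i\<le>m. \<Sum>j\<le>n. z i j * D i j)" .
    define row where "row = (\<Sum>j\<le>n. if k = j then 0 else z k j)"
    define col where "col = (\<Sum>i\<le>m. if i = k then 0 else z i k)"
    have rown: "0 \<le> row" unfolding row_def using zn by (intro sum_nonneg) auto
    have coln: "0 \<le> col" unfolding col_def using zn by (intro sum_nonneg) auto
    have offn: "0 \<le> off" unfolding off_def using zn by (intro sum_nonneg) auto
    have kk: "(\<Sum>j\<le>n. if k = j then z k j else 0) = z k k"
      using TP_zero[OF z, of k k] by (cases "k \<le> n") auto
    have kk2: "(\<Sum>i\<le>m. if i = k then z i k else 0) = z k k"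
      using TP_zero[OF z, of k k] by (cases "k \<le> m") auto
    have pr: "p m k = row + z k k"
      unfolding row_def TP_row[OF z, of k, symmetric] kk[symmetric] sum.distrib[symmetric]
      by (intro sum.cong) auto
    have pc: "p n k = col + z k k"
      unfolding col_def TP_col[OF z, of k, symmetric] kk2[symmetric] sum.distrib[symmetric]
      by (intro sum.cong) auto
    have rowle: "row \<le> off"
    proof (cases "k \<le> m")
      case True
      show ?thesis unfolding row_def off_def
        by (rule member_le_sum[where f="\<lambda>i. \<Sum>j\<le>n. if i = j then 0 else z i j"])
           (use True zn in \<open>auto intro: sum_nonneg\<close>)
    next
      case False
      then have "row = 0" unfolding row_def using TP_zero[OF z] by (intro sum.neutral) auto
      then show ?thesis using offn by simp
    qed
    have off2: "off = (\<Sum>j\<le>n. \<Sum>i\<le>m. if i = j then 0 else z i j)"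
      unfolding off_def by (rule sum.swap)
    have colle: "col \<le> off"
    proof (cases "k \<le> n")
      case True
      show ?thesis unfolding col_def off2
        by (rule member_le_sum[where f="\<lambda>j. \<Sum>i\<le>m. if i = j then 0 else z i j"])
           (use True zn in \<open>auto intro: sum_nonneg\<close>)
    next
      case False
      then have "col = 0" unfolding col_def using TP_zero[OF z] by (intro sum.neutral) auto
      then show ?thesis using offn by simp
    qed
    have "\<bar>p m k - p n k\<bar> \<le> 2 * off" using pr pc rown coln rowle colle by linarith
    then have "\<bar>p m k - p n k\<bar> * \<delta> \<le> 2 * off * \<delta>" using dpos by (simp add: mult_right_mono)
    then show "\<bar>p m k - p n k\<bar> * \<delta> / 2 \<le> (\<Sum>i\<le>m. \<Sum>j\<le>n. z i j * D i j)"
      using c1 by (simp add: mult.commute)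
  qed
  then have "\<bar>p m k - p n k\<bar> * \<delta> \<le> 0" using assms(5) by simp
  then show "p m k = p n k" using dpos
    by (metis abs_ge_zero abs_le_zero_iff mult_le_0_iff not_less right_minus_eq)
qed

lemma W_tri_plan: assumes "good N D" "a \<le> N" "b \<le> N" "c \<le> N"
  and z: "z \<in> transport_plans p a b" and w: "w \<in> transport_plans p b c"
  shows "W p D a c \<le> (\<Sum>i\<le>a. \<Sum>j\<le>b. z i j * D i j) + (\<Sum>j\<le>b. \<Sum>k\<le>c. w j k * D j k)"
proof -
  define g where "g i j k = (if p b j = 0 then 0 else z i j * w j k / p b j)" for i j k
  define u where "u i k = (\<Sum>j\<le>b. g i j k)" for i k
  note zn = TP_nonneg[OF z] and wn = TP_nonneg[OF w]
  have gn: "0 \<le> g i j k" for i j k unfolding g_def using zn wn nonneg by simp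
  have G1: "(\<Sum>k\<le>c. g i j k) = z i j" for i j
  proof (cases "p b j = 0")
    case True then show ?thesis using TP_colzero[OF z True] by (simp add: g_def)
  next
    case False
    have "(\<Sum>k\<le>c. g i j k) = z i j * (\<Sum>k\<le>c. w j k) / p b j"
      using False by (simp add: g_def sum_distrib_left sum_divide_distrib)
    also have "\<dots> = z i j" using False TP_row[OF w] by simp
    finally show ?thesis .
  qed
  have G2: "(\<Sum>i\<le>a. g i j k) = w j k" for j k
  proof (cases "p b j = 0")
    case True then show ?thesis using TP_rowzero[OF w True] by (simp add: g_def)
  next
    case False
    have "(\<Sum>i\<le>a. g i j k) = (\<Sum>i\<le>a. z i j) * w j k / p b j"
      using False by (simp add: g_def sum_distrib_right sum_divide_distrib)
    also have "\<dots> = w j k" using False TP_col[OF z] by simp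
    finally show ?thesis .
  qed
  have u: "u \<in> transport_plans p a c"
    unfolding transport_plans_def
  proof (intro CollectI conjI allI impI)
    fix i k show "0 \<le> u i k" unfolding u_def using gn by (intro sum_nonneg) auto
  next
    fix i k assume "a < i \<or> c < k"
    then show "u i k = 0" unfolding u_def g_def using TP_zero[OF z] TP_zero[OF w] by (auto intro!: sum.neutral)
  next
    fix i assume "i \<le> a"
    have "(\<Sum>k\<le>c. u i k) = (\<Sum>j\<le>b. \<Sum>k\<le>c. g i j k)" unfolding u_def by (rule sum.swap)
    also have "\<dots> = p a i" using G1 TP_row[OF z] by simp
    finally show "(\<Sum>k\<le>c. u i k) = p a i" .
  next
    fix k assume "k \<le> c"
    have "(\<Sum>i\<le>a. u i k) = (\<Sum>j\<le>b. \<Sum>i\<le>a. g i j k)" unfolding u_def by (rule sum.swap)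
    also have "\<dots> = p c k" using G2 TP_col[OF w] by simp
    finally show "(\<Sum>i\<le>a. u i k) = p c k" .
  qed
  have "W p D a c \<le> (\<Sum>i\<le>a. \<Sum>k\<le>c. u i k * D i k)"
    by (rule W_lower[OF u assms(1,2,4)])
  also have "\<dots> = (\<Sum>i\<le>a. \<Sum>k\<le>c. \<Sum>j\<le>b. g i j k * D i k)"
    unfolding u_def by (simp add: sum_distrib_right)
  also have "\<dots> \<le> (\<Sum>i\<le>a. \<Sum>k\<le>c. \<Sum>j\<le>b. g i j k * D i j + g i j k * D j k)"
  proof (intro sum_mono)
    fix i j k assume "i \<in> {..a}" "k \<in> {..c}" "j \<in> {..b}"
    then have "D i k \<le> D i j + D j k" using assms(1-4) unfolding good_def by auto
    then show "g i j k * D i k \<le> g i j k * D i j + g i j k * D j k"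
      using gn[of i j k] by (metis distrib_left mult_left_mono)
  qed
  also have "\<dots> = (\<Sum>i\<le>a. \<Sum>k\<le>c. \<Sum>j\<le>b. g i j k * D i j) + (\<Sum>i\<le>a. \<Sum>k\<le>c. \<Sum>j\<le>b. g i j k * D j k)"
    by (simp add: sum.distrib)
  also have "(\<Sum>i\<le>a. \<Sum>k\<le>c. \<Sum>j\<le>b. g i j k * D i j) = (\<Sum>i\<le>a. \<Sum>j\<le>b. z i j * D i j)"
  proof -
    have "(\<Sum>i\<le>a. \<Sum>k\<le>c. \<Sum>j\<le>b. g i j k * D i j) = (\<Sum>i\<le>a. \<Sum>j\<le>b. \<Sum>k\<le>c. g i j k * D i j)"
      by (intro sum.cong refl sum.swap)
    also have "\<dots> = (\<Sum>i\<le>a. \<Sum>j\<le>b. z i j * D i j)"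
      using G1 by (simp add: sum_distrib_right[symmetric])
    finally show ?thesis .
  qed
  also have "(\<Sum>i\<le>a. \<Sum>k\<le>c. \<Sum>j\<le>b. g i j k * D j k) = (\<Sum>j\<le>b. \<Sum>k\<le>c. w j k * D j k)"
  proof -
    have "(\<Sum>i\<le>a. \<Sum>k\<le>c. \<Sum>j\<le>b. g i j k * D j k) = (\<Sum>i\<le>a. \<Sum>j\<le>b. \<Sum>k\<le>c. g i j k * D j k)"
      by (intro sum.cong refl sum.swap)
    also have "\<dots> = (\<Sum>j\<le>b. \<Sum>i\<le>a. \<Sum>k\<le>c. g i j k * D j k)"
      by (rule sum.swap)
    also have "\<dots> = (\<Sum>j\<le>b. \<Sum>k\<le>c. \<Sum>i\<le>a. g i j k * D j k)"
      by (intro sum.cong refl sum.swap)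
    also have "\<dots> = (\<Sum>j\<le>b. \<Sum>k\<le>c. w j k * D j k)"
      using G2 by (simp add: sum_distrib_right[symmetric])
    finally show ?thesis .
  qed
  finally show ?thesis .
qed

lemma W_tri: assumes "good N D" "a \<le> N" "b \<le> N" "c \<le> N"
  shows "W p D a c \<le> W p D a b + W p D b c"
proof -
  have "W p D a c - W p D a b \<le> W p D b c"
  proof (rule W_greatest)
    fix w assume w: "w \<in> transport_plans p b c"
    have "W p D a c - (\<Sum>j\<le>b. \<Sum>k\<le>c. w j k * D j k) \<le> W p D a b"
    proof (rule W_greatest)
      fix z assume z: "z \<in> transport_plans p a b"
      show "W p D a c - (\<Sum>j\<le>b. \<Sum>k\<le>c. w j k * D j k) \<le> (\<Sum>i\<le>a. \<Sum>j\<le>b. z i j * D i j)"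
        using W_tri_plan[OF assms z w] by linarith
    qed
    then show "W p D a c - W p D a b \<le> (\<Sum>j\<le>b. \<Sum>k\<le>c. w j k * D j k)" by linarith
  qed
  then show ?thesis by linarith
qed

lemma all_good:
  assumes distinct: "\<And>m n. m \<noteq> n \<Longrightarrow> p m \<noteq> p n"
  shows "good N (dd p)"
proof (induction N)
  case 0
  then show ?case unfolding good_def by auto
next
  case (Suc N)
  note IH = Suc.IH
  have B: "0 \<le> dd p x y \<and> dd p x y \<le> 1 \<and> dd p x y = dd p y x \<and> (dd p x y = 0 \<longleftrightarrow> x = y)"
    if "x \<le> Suc N" "y \<le> Suc N" for x y
  proof (cases x)
    case 0 then show ?thesis by (cases y) auto
  next
    case (Suc m) note xm = this
    show ?thesis
    proof (cases y)
      case 0 then show ?thesis using xm by auto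
    next
      case (Suc n)
      have mn: "m \<le> N" "n \<le> N" using that xm Suc by auto
      have z: "W p (dd p) m n = 0 \<longleftrightarrow> m = n"
      proof
        assume "W p (dd p) m n = 0"
        then show "m = n" using W_pos[OF IH mn] distinct by blast
      next
        assume "m = n" then show "W p (dd p) m n = 0" using W_refl[OF IH mn(1)] by simp
      qed
      have e1: "dd p x y = W p (dd p) m n" "dd p y x = W p (dd p) n m" using xm Suc dd_W by auto
      show ?thesis unfolding e1 using W_nonneg[OF IH mn] W_le1[OF IH mn] W_sym[OF IH mn] z xm Suc by simp
    qed
  qed
  have T: "dd p x z \<le> dd p x y + dd p y z" if "x \<le> Suc N" "y \<le> Suc N" "z \<le> Suc N" for x y z
  proof (cases "x = 0 \<or> y = 0 \<or> z = 0")
    case True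
    note bxy = B[OF that(1,2)] and byz = B[OF that(2,3)] and bxz = B[OF that(1,3)]
    have d0: "dd p 0 v = (if v = 0 then 0 else 1)" "dd p v 0 = (if v = 0 then 0 else 1)" for v
      by (cases v; simp)+
    show ?thesis
    proof (cases "x = 0")
      case x0: True
      then show ?thesis using byz by (simp add: d0)
    next
      case xn: False
      show ?thesis
      proof (cases "y = 0")
        case True
        then show ?thesis using xn bxz by (simp add: d0)
      next
        case False
        then have "z = 0" using True xn by simp
        then show ?thesis using xn False bxy by (simp add: d0)
      qed
    qed
  next
    case False
    then obtain a b c where abc: "x = Suc a" "y = Suc b" "z = Suc c"
      by (metis not0_implies_Suc)
    have "a \<le> N" "b \<le> N" "c \<le> N" using that abc by auto
    then have "W p (dd p) a c \<le> W p (dd p) a b + W p (dd p) b c" by (rule W_tri[OF IH])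
    then show ?thesis unfolding abc dd_W .
  qed
  show ?case unfolding good_def
  proof (intro allI impI)
    fix i j k assume ijk: "i \<le> Suc N" "j \<le> Suc N" "k \<le> Suc N"
    show "0 \<le> dd p i j \<and> dd p i j \<le> 1 \<and> dd p i j = dd p j i \<and> (dd p i j = 0 \<longleftrightarrow> i = j) \<and> dd p i k \<le> dd p i j + dd p j k"
      using B[OF ijk(1,2)] T[OF ijk] by blast
  qed
qed

end
theorem theorem2:
  fixes p :: "nat \<Rightarrow> nat \<Rightarrow> real"
  assumes nonneg: "\<And>n i. p n i \<ge> 0"
    and supp: "\<And>n i. i > n \<Longrightarrow> p n i = 0"
    and total: "\<And>n. (\<Sum>i\<le>n. p n i) = 1"
    and distinct: "\<And>m n. m \<noteq> n \<Longrightarrow> p m \<noteq> p n"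
  shows "Metric_space {-1..} (dmet p)"
proof -
  have G: "good N (dd p)" for N using all_good[OF nonneg supp total distinct] .
  have P: "0 \<le> dd p x y \<and> dd p x y = dd p y x \<and> (dd p x y = 0 \<longleftrightarrow> x = y)
       \<and> dd p x z \<le> dd p x y + dd p y z" for x y z
  proof -
    let ?M = "max x (max y z)"
    have H: "\<forall>i j k. i\<le>?M \<longrightarrow> j\<le>?M \<longrightarrow> k\<le>?M \<longrightarrow> 0 \<le> dd p i j \<and> dd p i j \<le> 1 \<and> dd p i j = dd p j i
      \<and> (dd p i j = 0 \<longleftrightarrow> i = j) \<and> dd p i k \<le> dd p i j + dd p j k"
      using G[of ?M] unfolding good_def .
    have "x \<le> ?M" "y \<le> ?M" "z \<le> ?M" by auto
    then show ?thesis using H by blast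
  qed
  show ?thesis
  proof
    fix x y :: int
    show "0 \<le> dmet p x y" unfolding dmet_def using P[of "nat (x+1)" "nat (y+1)" 0] by (rule conjunct1)
  next
    fix x y :: int
    show "dmet p x y = dmet p y x" unfolding dmet_def using P[of "nat (x+1)" "nat (y+1)" 0] by (rule conjunct1[OF conjunct2])
  next
    fix x y :: int
    assume xy: "x \<in> {-1..}" "y \<in> {-1..}"
    have e: "nat (x+1) = nat (y+1) \<longleftrightarrow> x = y" using xy by auto
    have "dd p (nat (x+1)) (nat (y+1)) = 0 \<longleftrightarrow> nat (x+1) = nat (y+1)"
      using P[of "nat (x+1)" "nat (y+1)" 0] by (rule conjunct1[OF conjunct2[OF conjunct2]])
    then show "dmet p x y = 0 \<longleftrightarrow> x = y" unfolding dmet_def using e by simp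
  next
    fix x y z :: int
    show "dmet p x z \<le> dmet p x y + dmet p y z" unfolding dmet_def
      using P[of "nat (x+1)" "nat (y+1)" "nat (z+1)"] by (rule conjunct2[OF conjunct2[OF conjunct2]])
  qed
qed

end
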